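(* Let $\mathcal D$ be a complete, cocomplete, extremally co-well-powered (extremal epi, mono) category. Then $\mathcal Q(\mathcal D)$ is an (extremal epi, mono) category.
   Context: For a category $\mathcal D$ and an object $d$, $M(d)$ denotes the class of all morphisms with source $d$, quasi-ordered by $\phi_1\ge\phi_2$ iff there is $h$ with $h\phi_1=\phi_2$. A projective filtration on $d$ is a non-empty, directed, saturated subclass $F\subseteq M(d)$ (saturated: $\phi_1\in F$, $\phi_1\ge\phi_2$ imply $\phi_2\in F$). A subclass $S\subseteq F$ is initial if every $\phi\in F$ satisfies $\phi\le\psi$ for some $\psi\in S$. For $f\colon d'\to d$, $f^*(F)=\{\phi f:\phi\in F\}$. $\mathcal P(\mathcal D)$ has objects $(d,F)$, and morphisms $(d_1,F_1)\to(d_2,F_2)$ the morphisms $f\colon d_1\to d_2$ of $\mathcal D$ with $f^*(F_2)\subseteq F_1$. $F$ is reduced if it has an initial subclass of extremal epimorphisms; $\mathcal Q(\mathcal D)$ is the full subcategory of $\mathcal P(\mathcal D)$ of reduced filtered objects. An (extremal epi, mono) category is one in which every morphism factors as an extremal epimorphism followed by a monomorphism and such factorisations have the unique diagonal fill-in property. *)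

theory Defs
  imports Main
begin

record ('o, 'm) cat =
  Ob   :: "'o set"
  Ar   :: "'m set"
  dom  :: "'m \<Rightarrow> 'o"
  cod  :: "'m \<Rightarrow> 'o"
  idt  :: "'o \<Rightarrow> 'm"
  comp :: "'m \<Rightarrow> 'm \<Rightarrow> 'm"   (* comp C g f = g o f, defined when cod f = dom g *)

definition is_cat :: "('o, 'm, 'x) cat_scheme \<Rightarrow> bool" where
  "is_cat C \<longleftrightarrow>
     (\<forall>f\<in>Ar C. dom C f \<in> Ob C \<and> cod C f \<in> Ob C) \<and>
     (\<forall>a\<in>Ob C. idt C a \<in> Ar C \<and> dom C (idt C a) = a \<and> cod C (idt C a) = a) \<and>
     (\<forall>f\<in>Ar C. \<forall>g\<in>Ar C. cod C f = dom C g \<longrightarrow>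
        comp C g f \<in> Ar C \<and> dom C (comp C g f) = dom C f \<and> cod C (comp C g f) = cod C g) \<and>
     (\<forall>f\<in>Ar C. comp C (idt C (cod C f)) f = f \<and> comp C f (idt C (dom C f)) = f) \<and>
     (\<forall>f\<in>Ar C. \<forall>g\<in>Ar C. \<forall>h\<in>Ar C. cod C f = dom C g \<and> cod C g = dom C h \<longrightarrow>
        comp C h (comp C g f) = comp C (comp C h g) f)"

definition hom :: "('o, 'm, 'x) cat_scheme \<Rightarrow> 'o \<Rightarrow> 'o \<Rightarrow> 'm set" where
  "hom C a b = {f \<in> Ar C. dom C f = a \<and> cod C f = b}"

definition mono :: "('o, 'm, 'x) cat_scheme \<Rightarrow> 'm \<Rightarrow> bool" where
  "mono C m \<longleftrightarrow> m \<in> Ar C \<and>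
     (\<forall>f\<in>Ar C. \<forall>g\<in>Ar C. cod C f = dom C m \<and> cod C g = dom C m \<and> dom C f = dom C g \<and>
        comp C m f = comp C m g \<longrightarrow> f = g)"

definition epi :: "('o, 'm, 'x) cat_scheme \<Rightarrow> 'm \<Rightarrow> bool" where
  "epi C e \<longleftrightarrow> e \<in> Ar C \<and>
     (\<forall>f\<in>Ar C. \<forall>g\<in>Ar C. dom C f = cod C e \<and> dom C g = cod C e \<and> cod C f = cod C g \<and>
        comp C f e = comp C g e \<longrightarrow> f = g)"

definition iso :: "('o, 'm, 'x) cat_scheme \<Rightarrow> 'm \<Rightarrow> bool" where
  "iso C f \<longleftrightarrow> f \<in> Ar C \<and>
     (\<exists>g\<in>Ar C. dom C g = cod C f \<and> cod C g = dom C f \<and>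
        comp C g f = idt C (dom C f) \<and> comp C f g = idt C (cod C f))"

definition ext_epi :: "('o, 'm, 'x) cat_scheme \<Rightarrow> 'm \<Rightarrow> bool" where
  "ext_epi C e \<longleftrightarrow> epi C e \<and>
     (\<forall>m\<in>Ar C. \<forall>g\<in>Ar C. mono C m \<and> cod C g = dom C m \<and> comp C m g = e \<longrightarrow> iso C m)"

definition has_ext_epi_mono_factorizations :: "('o, 'm, 'x) cat_scheme \<Rightarrow> bool" where
  "has_ext_epi_mono_factorizations C \<longleftrightarrow>
     (\<forall>f\<in>Ar C. \<exists>e m. ext_epi C e \<and> mono C m \<and> cod C e = dom C m \<and> comp C m e = f)"

definition has_diagonal_fill_in :: "('o, 'm, 'x) cat_scheme \<Rightarrow> bool" where
  "has_diagonal_fill_in C \<longleftrightarrow>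
     (\<forall>e m u v. ext_epi C e \<and> mono C m \<and> u \<in> Ar C \<and> v \<in> Ar C \<and>
        dom C u = dom C e \<and> cod C u = dom C m \<and> dom C v = cod C e \<and> cod C v = cod C m \<and>
        comp C v e = comp C m u \<longrightarrow>
        (\<exists>!d. d \<in> Ar C \<and> dom C d = cod C e \<and> cod C d = dom C m \<and>
              comp C d e = u \<and> comp C m d = v))"

definition ext_epi_mono_cat :: "('o, 'm, 'x) cat_scheme \<Rightarrow> bool" where
  "ext_epi_mono_cat C \<longleftrightarrow> is_cat C \<and> has_ext_epi_mono_factorizations C \<and> has_diagonal_fill_in C"

definition small :: "'u itself \<Rightarrow> 'a set \<Rightarrow> bool" where
  "small u A \<longleftrightarrow> ordLess2 (card_of A) (card_of (UNIV :: 'u set))"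

text \<open>The cardinality of 'u is strongly inaccessible (uncountable, regular, strong limit),
  i.e. the size of a Grothendieck universe.\<close>
definition universe_type :: "'u itself \<Rightarrow> bool" where
  "universe_type u \<longleftrightarrow>
     ordLess2 (card_of (UNIV :: nat set)) (card_of (UNIV :: 'u set)) \<and>
     regularCard (card_of (UNIV :: 'u set)) \<and>
     (\<forall>A :: 'u set. small u A \<longrightarrow> small u (Pow A))"

definition locally_small :: "'u itself \<Rightarrow> ('o, 'm, 'x) cat_scheme \<Rightarrow> bool" where
  "locally_small u C \<longleftrightarrow> (\<forall>a\<in>Ob C. \<forall>b\<in>Ob C. small u (hom C a b))"

definition diagram :: "('i, 'j) cat \<Rightarrow> ('o, 'm, 'x) cat_scheme \<Rightarrow> ('i \<Rightarrow> 'o) \<Rightarrow> ('j \<Rightarrow> 'm) \<Rightarrow> bool" where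
  "diagram J C Fo Fa \<longleftrightarrow> is_cat J \<and>
     (\<forall>j\<in>Ob J. Fo j \<in> Ob C) \<and>
     (\<forall>a\<in>Ar J. Fa a \<in> hom C (Fo (dom J a)) (Fo (cod J a))) \<and>
     (\<forall>j\<in>Ob J. Fa (idt J j) = idt C (Fo j)) \<and>
     (\<forall>a\<in>Ar J. \<forall>b\<in>Ar J. cod J a = dom J b \<longrightarrow> Fa (comp J b a) = comp C (Fa b) (Fa a))"

definition cone :: "('i, 'j) cat \<Rightarrow> ('o, 'm, 'x) cat_scheme \<Rightarrow> ('i \<Rightarrow> 'o) \<Rightarrow> ('j \<Rightarrow> 'm) \<Rightarrow> 'o \<Rightarrow> ('i \<Rightarrow> 'm) \<Rightarrow> bool" where
  "cone J C Fo Fa c l \<longleftrightarrow> c \<in> Ob C \<and>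
     (\<forall>j\<in>Ob J. l j \<in> hom C c (Fo j)) \<and>
     (\<forall>a\<in>Ar J. comp C (Fa a) (l (dom J a)) = l (cod J a))"

definition limit :: "('i, 'j) cat \<Rightarrow> ('o, 'm, 'x) cat_scheme \<Rightarrow> ('i \<Rightarrow> 'o) \<Rightarrow> ('j \<Rightarrow> 'm) \<Rightarrow> 'o \<Rightarrow> ('i \<Rightarrow> 'm) \<Rightarrow> bool" where
  "limit J C Fo Fa c l \<longleftrightarrow> cone J C Fo Fa c l \<and>
     (\<forall>c' l'. cone J C Fo Fa c' l' \<longrightarrow>
        (\<exists>!h. h \<in> hom C c' c \<and> (\<forall>j\<in>Ob J. comp C (l j) h = l' j)))"

definition cocone :: "('i, 'j) cat \<Rightarrow> ('o, 'm, 'x) cat_scheme \<Rightarrow> ('i \<Rightarrow> 'o) \<Rightarrow> ('j \<Rightarrow> 'm) \<Rightarrow> 'o \<Rightarrow> ('i \<Rightarrow> 'm) \<Rightarrow> bool" where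
  "cocone J C Fo Fa c l \<longleftrightarrow> c \<in> Ob C \<and>
     (\<forall>j\<in>Ob J. l j \<in> hom C (Fo j) c) \<and>
     (\<forall>a\<in>Ar J. comp C (l (cod J a)) (Fa a) = l (dom J a))"

definition colimit :: "('i, 'j) cat \<Rightarrow> ('o, 'm, 'x) cat_scheme \<Rightarrow> ('i \<Rightarrow> 'o) \<Rightarrow> ('j \<Rightarrow> 'm) \<Rightarrow> 'o \<Rightarrow> ('i \<Rightarrow> 'm) \<Rightarrow> bool" where
  "colimit J C Fo Fa c l \<longleftrightarrow> cocone J C Fo Fa c l \<and>
     (\<forall>c' l'. cocone J C Fo Fa c' l' \<longrightarrow>
        (\<exists>!h. h \<in> hom C c c' \<and> (\<forall>j\<in>Ob J. comp C h (l j) = l' j)))"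

text \<open>Complete / cocomplete: (co)limits of all small diagrams; every small index
  category is (up to isomorphism) one with objects and arrows in 'u.\<close>
definition complete :: "'u itself \<Rightarrow> ('o, 'm, 'x) cat_scheme \<Rightarrow> bool" where
  "complete u C \<longleftrightarrow>
     (\<forall>(J :: ('u, 'u) cat) Fo Fa. small u (Ob J) \<and> small u (Ar J) \<and> diagram J C Fo Fa \<longrightarrow>
        (\<exists>c l. limit J C Fo Fa c l))"

definition cocomplete :: "'u itself \<Rightarrow> ('o, 'm, 'x) cat_scheme \<Rightarrow> bool" where
  "cocomplete u C \<longleftrightarrow>
     (\<forall>(J :: ('u, 'u) cat) Fo Fa. small u (Ob J) \<and> small u (Ar J) \<and> diagram J C Fo Fa \<longrightarrow>
        (\<exists>c l. colimit J C Fo Fa c l))"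

definition ext_co_well_powered :: "'u itself \<Rightarrow> ('o, 'm, 'x) cat_scheme \<Rightarrow> bool" where
  "ext_co_well_powered u C \<longleftrightarrow>
     (\<forall>d\<in>Ob C. \<exists>S. small u S \<and> (\<forall>s\<in>S. ext_epi C s \<and> dom C s = d) \<and>
        (\<forall>e. ext_epi C e \<and> dom C e = d \<longrightarrow>
           (\<exists>s\<in>S. \<exists>i. iso C i \<and> dom C i = cod C e \<and> cod C i = cod C s \<and> comp C i e = s)))"

definition Mor_from :: "('o, 'm, 'x) cat_scheme \<Rightarrow> 'o \<Rightarrow> 'm set" where
  "Mor_from C d = {f \<in> Ar C. dom C f = d}"

definition mgeq :: "('o, 'm, 'x) cat_scheme \<Rightarrow> 'm \<Rightarrow> 'm \<Rightarrow> bool" where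
  "mgeq C p1 p2 \<longleftrightarrow> (\<exists>h\<in>Ar C. dom C h = cod C p1 \<and> comp C h p1 = p2)"

definition proj_filtration :: "('o, 'm, 'x) cat_scheme \<Rightarrow> 'o \<Rightarrow> 'm set \<Rightarrow> bool" where
  "proj_filtration C d F \<longleftrightarrow> F \<subseteq> Mor_from C d \<and> F \<noteq> {} \<and>
     (\<forall>p1\<in>F. \<forall>p2\<in>F. \<exists>q\<in>F. mgeq C q p1 \<and> mgeq C q p2) \<and>
     (\<forall>p1\<in>F. \<forall>p2\<in>Mor_from C d. mgeq C p1 p2 \<longrightarrow> p2 \<in> F)"

definition initial_sub :: "('o, 'm, 'x) cat_scheme \<Rightarrow> 'm set \<Rightarrow> 'm set \<Rightarrow> bool" where
  "initial_sub C F S \<longleftrightarrow> S \<subseteq> F \<and> (\<forall>p\<in>F. \<exists>q\<in>S. mgeq C q p)"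

definition reduced :: "('o, 'm, 'x) cat_scheme \<Rightarrow> 'm set \<Rightarrow> bool" where
  "reduced C F \<longleftrightarrow> (\<exists>S. initial_sub C F S \<and> (\<forall>s\<in>S. ext_epi C s))"

definition pull :: "('o, 'm, 'x) cat_scheme \<Rightarrow> 'm \<Rightarrow> 'm set \<Rightarrow> 'm set" where
  "pull C f F = {comp C p f | p. p \<in> F}"

definition Qcat :: "('o, 'm, 'x) cat_scheme \<Rightarrow>
    ('o \<times> 'm set, 'm \<times> ('o \<times> 'm set) \<times> ('o \<times> 'm set)) cat" where
  "Qcat C = (let QO = {(d, F). d \<in> Ob C \<and> proj_filtration C d F \<and> reduced C F} in
     \<lparr> Ob = QO,
       Ar = {(f, X, Y). X \<in> QO \<and> Y \<in> QO \<and> f \<in> hom C (fst X) (fst Y) \<and>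
                         pull C f (snd Y) \<subseteq> snd X},
       dom = (\<lambda>(f, X, Y). X),
       cod = (\<lambda>(f, X, Y). Y),
       idt = (\<lambda>X. (idt C (fst X), X, X)),
       comp = (\<lambda>(g, Y', Z) (f, X, Y). (comp C g f, X, Z)) \<rparr>)"

end

theory Submission imports Defs begin

lemma univ_infinite:
  assumes "universe_type TYPE('u)" shows "infinite (UNIV :: 'u set)"
  using assms unfolding universe_type_def
  using infinite_iff_card_of_nat ordLess_imp_ordLeq by blast

lemma small_finite:
  assumes "universe_type TYPE('u)" "finite A"
  shows "small TYPE('u) A"
  unfolding small_def
  by (rule finite_ordLess_infinite) (use univ_infinite[OF assms(1)] assms(2) in
      \<open>auto simp: card_of_Well_order Field_card_of card_of_well_order_on\<close>)

definition Jd :: "'u \<Rightarrow> 'u \<Rightarrow> ('u,'u) cat" where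
  "Jd a b = \<lparr>Ob = {a,b}, Ar = {a,b}, dom = id, cod = id, idt = id, comp = (\<lambda>g f. f)\<rparr>"

lemma Jd_cat: "is_cat (Jd a b)"
  unfolding is_cat_def Jd_def by auto

lemma binprod:
  assumes U: "universe_type TYPE('u)" and cat: "is_cat C" and cpl: "complete TYPE('u) C"
    and x: "x \<in> Ob C" and y: "y \<in> Ob C"
  shows "\<exists>P p1 p2. P \<in> Ob C \<and> p1 \<in> hom C P x \<and> p2 \<in> hom C P y \<and>
     (\<forall>z f1 f2. f1 \<in> hom C z x \<longrightarrow> f2 \<in> hom C z y \<longrightarrow>
        (\<exists>!h. h \<in> hom C z P \<and> comp C p1 h = f1 \<and> comp C p2 h = f2))"
proof -
  obtain a b :: 'u where ab: "a \<noteq> b"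
  proof -
    fix a :: 'u
    have "(UNIV :: 'u set) \<noteq> {a}" using univ_infinite[OF U] by (metis finite.emptyI finite_insert)
    then obtain b where "b \<noteq> a" by auto
    then show ?thesis using that by blast
  qed
  define Fo where "Fo = (\<lambda>j. if j = a then x else y)"
  define Fa where "Fa = (\<lambda>j. if j = a then idt C x else idt C y)"
  have cc: "\<forall>a\<in>Ob C. idt C a \<in> Ar C \<and> dom C (idt C a) = a \<and> cod C (idt C a) = a"
    and idl: "\<forall>f\<in>Ar C. comp C (idt C (cod C f)) f = f \<and> comp C f (idt C (dom C f)) = f"
    and cmp: "\<forall>f\<in>Ar C. \<forall>g\<in>Ar C. cod C f = dom C g \<longrightarrow>
        comp C g f \<in> Ar C \<and> dom C (comp C g f) = dom C f \<and> cod C (comp C g f) = cod C g"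
    and ob: "\<forall>f\<in>Ar C. dom C f \<in> Ob C \<and> cod C f \<in> Ob C"
    using cat unfolding is_cat_def by blast+
  have dia: "diagram (Jd a b) C Fo Fa"
  proof -
    have i1: "comp C (idt C x) (idt C x) = idt C x" using cc idl x by metis
    have i2: "comp C (idt C y) (idt C y) = idt C y" using cc idl y by metis
    show ?thesis
    proof -
      have ix: "idt C x \<in> hom C x x" and iy: "idt C y \<in> hom C y y"
        using cc x y by (auto simp: hom_def)
      have J: "Ob (Jd a b) = {a,b}" "Ar (Jd a b) = {a,b}" "dom (Jd a b) = id" "cod (Jd a b) = id"
        "idt (Jd a b) = id" "comp (Jd a b) = (\<lambda>g f. f)" by (simp_all add: Jd_def)
      have Fa: "Fa a = idt C x" "Fa b = idt C y" and Fo: "Fo a = x" "Fo b = y"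
        using ab by (simp_all add: Fa_def Fo_def)
      show ?thesis
        unfolding diagram_def J using Jd_cat[of a b] x y ix iy i1 i2 Fa Fo ab
        by (simp only: id_apply ball_simps insert_iff empty_iff simp_thms) blast
    qed
  qed
  have s1: "small TYPE('u) (Ob (Jd a b))" and s2: "small TYPE('u) (Ar (Jd a b))"
    using small_finite[OF U, of "{a,b}"] by (simp_all add: Jd_def)
  obtain c l where lim: "limit (Jd a b) C Fo Fa c l"
    using cpl[unfolded complete_def, rule_format, of "Jd a b" Fo Fa] s1 s2 dia by blast
  have cn: "cone (Jd a b) C Fo Fa c l" using lim by (simp add: limit_def)
  have la: "l a \<in> hom C c x" and lb: "l b \<in> hom C c y" and cO: "c \<in> Ob C"
    using cn ab by (auto simp: cone_def Jd_def Fo_def)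
  show ?thesis
  proof (intro exI conjI allI impI)
    fix z f1 f2 assume f1: "f1 \<in> hom C z x" and f2: "f2 \<in> hom C z y"
    define l' where "l' = (\<lambda>j. if j = a then f1 else f2)"
    have zO: "z \<in> Ob C" using f1 ob by (auto simp: hom_def)
    have "cone (Jd a b) C Fo Fa z l'"
      unfolding cone_def using zO f1 f2 ab idl
      by (auto simp: Jd_def Fo_def Fa_def l'_def hom_def)
    then have ex: "\<exists>!h. h \<in> hom C z c \<and> (\<forall>j\<in>Ob (Jd a b). comp C (l j) h = l' j)"
      using lim unfolding limit_def by blast
    have eq: "(\<forall>j\<in>Ob (Jd a b). comp C (l j) h = l' j) \<longleftrightarrow> comp C (l a) h = f1 \<and> comp C (l b) h = f2" for h
      using ab by (auto simp: Jd_def l'_def)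
    show "\<exists>!h. h \<in> hom C z c \<and> comp C (l a) h = f1 \<and> comp C (l b) h = f2"
      using ex unfolding eq .
  qed (use la lb cO in auto)
qed


locale EM =
  fixes C :: "('o,'m) cat"
  assumes cat: "is_cat C"
  and fact: "has_ext_epi_mono_factorizations C"
  and fill: "has_diagonal_fill_in C"
  and prod: "\<forall>x\<in>Ob C. \<forall>y\<in>Ob C. \<exists>P p1 p2. P \<in> Ob C \<and> p1 \<in> hom C P x \<and> p2 \<in> hom C P y \<and>
     (\<forall>z f1 f2. f1 \<in> hom C z x \<longrightarrow> f2 \<in> hom C z y \<longrightarrow>
        (\<exists>!h. h \<in> hom C z P \<and> comp C p1 h = f1 \<and> comp C p2 h = f2))"
begin

lemma ar_ob: "f \<in> Ar C \<Longrightarrow> dom C f \<in> Ob C" "f \<in> Ar C \<Longrightarrow> cod C f \<in> Ob C"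
  using cat unfolding is_cat_def by blast+

lemma id_ar: "a \<in> Ob C \<Longrightarrow> idt C a \<in> Ar C"
  and id_dom[simp]: "a \<in> Ob C \<Longrightarrow> dom C (idt C a) = a"
  and id_cod[simp]: "a \<in> Ob C \<Longrightarrow> cod C (idt C a) = a"
  using cat unfolding is_cat_def by blast+

lemma comp_ar: "f \<in> Ar C \<Longrightarrow> g \<in> Ar C \<Longrightarrow> cod C f = dom C g \<Longrightarrow> comp C g f \<in> Ar C"
  and comp_dom[simp]: "f \<in> Ar C \<Longrightarrow> g \<in> Ar C \<Longrightarrow> cod C f = dom C g \<Longrightarrow> dom C (comp C g f) = dom C f"
  and comp_cod[simp]: "f \<in> Ar C \<Longrightarrow> g \<in> Ar C \<Longrightarrow> cod C f = dom C g \<Longrightarrow> cod C (comp C g f) = cod C g"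
  using cat unfolding is_cat_def by blast+

lemma id_l: "f \<in> Ar C \<Longrightarrow> cod C f = a \<Longrightarrow> comp C (idt C a) f = f"
  and id_r: "f \<in> Ar C \<Longrightarrow> dom C f = a \<Longrightarrow> comp C f (idt C a) = f"
  using cat unfolding is_cat_def by blast+

lemma assoc: "f \<in> Ar C \<Longrightarrow> g \<in> Ar C \<Longrightarrow> h \<in> Ar C \<Longrightarrow> cod C f = dom C g \<Longrightarrow> cod C g = dom C h \<Longrightarrow>
   comp C h (comp C g f) = comp C (comp C h g) f"
  using cat unfolding is_cat_def by blast

lemma factor: "f \<in> Ar C \<Longrightarrow> \<exists>e m. ext_epi C e \<and> mono C m \<and> cod C e = dom C m \<and> comp C m e = f"
  using fact unfolding has_ext_epi_mono_factorizations_def by blast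

lemma ext_epi_ar: "ext_epi C e \<Longrightarrow> e \<in> Ar C"
  unfolding ext_epi_def epi_def by blast

lemma mono_ar: "mono C m \<Longrightarrow> m \<in> Ar C"
  unfolding mono_def by blast

lemma fillin:
  assumes "ext_epi C e" "mono C m" "u \<in> Ar C" "v \<in> Ar C" "dom C u = dom C e" "cod C u = dom C m"
    "dom C v = cod C e" "cod C v = cod C m" "comp C v e = comp C m u"
  shows "\<exists>!d. d \<in> Ar C \<and> dom C d = cod C e \<and> cod C d = dom C m \<and> comp C d e = u \<and> comp C m d = v"
  using fill assms unfolding has_diagonal_fill_in_def by blast

lemma mor_from[simp]: "p \<in> Mor_from C d \<longleftrightarrow> p \<in> Ar C \<and> dom C p = d"
  by (simp add: Mor_from_def)

lemma pf_sub: "proj_filtration C d F \<Longrightarrow> p \<in> F \<Longrightarrow> p \<in> Ar C \<and> dom C p = d"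
  unfolding proj_filtration_def by auto

lemma pf_sat: "proj_filtration C d F \<Longrightarrow> p1 \<in> F \<Longrightarrow> p2 \<in> Ar C \<Longrightarrow> dom C p2 = d \<Longrightarrow> mgeq C p1 p2 \<Longrightarrow> p2 \<in> F"
  unfolding proj_filtration_def by auto

lemma pf_dir: "proj_filtration C d F \<Longrightarrow> p1 \<in> F \<Longrightarrow> p2 \<in> F \<Longrightarrow> \<exists>q\<in>F. mgeq C q p1 \<and> mgeq C q p2"
  unfolding proj_filtration_def by auto

lemma pf_ne: "proj_filtration C d F \<Longrightarrow> \<exists>p. p \<in> F"
  unfolding proj_filtration_def by auto

lemma red_ext: "reduced C F \<Longrightarrow> p \<in> F \<Longrightarrow> \<exists>t\<in>F. ext_epi C t \<and> mgeq C t p"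
  unfolding reduced_def initial_sub_def by blast

lemma mgeqI: "h \<in> Ar C \<Longrightarrow> dom C h = cod C p \<Longrightarrow> comp C h p = q \<Longrightarrow> mgeq C p q"
  unfolding mgeq_def by blast

lemma prodE:
  assumes "x \<in> Ob C" "y \<in> Ob C"
  obtains P q1 q2 where "P \<in> Ob C" "q1 \<in> hom C P x" "q2 \<in> hom C P y"
    "\<And>z f1 f2. f1 \<in> hom C z x \<Longrightarrow> f2 \<in> hom C z y \<Longrightarrow>
        (\<exists>!h. h \<in> hom C z P \<and> comp C q1 h = f1 \<and> comp C q2 h = f2)"
proof -
  have "\<exists>P p1 p2. P \<in> Ob C \<and> p1 \<in> hom C P x \<and> p2 \<in> hom C P y \<and>
     (\<forall>z f1 f2. f1 \<in> hom C z x \<longrightarrow> f2 \<in> hom C z y \<longrightarrow>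
        (\<exists>!h. h \<in> hom C z P \<and> comp C p1 h = f1 \<and> comp C p2 h = f2))"
    using bspec[OF bspec[OF prod assms(1)] assms(2)] .
  then obtain P q1 q2 where "P \<in> Ob C \<and> q1 \<in> hom C P x \<and> q2 \<in> hom C P y \<and>
     (\<forall>z f1 f2. f1 \<in> hom C z x \<longrightarrow> f2 \<in> hom C z y \<longrightarrow>
        (\<exists>!h. h \<in> hom C z P \<and> comp C q1 h = f1 \<and> comp C q2 h = f2))"
    by (elim exE)
  then show ?thesis using that by blast
qed

definition gmax :: "'m \<Rightarrow> 'm set \<Rightarrow> 'm set" where
  "gmax g F = {p. p \<in> Ar C \<and> dom C p = cod C g \<and> comp C p g \<in> F}"

lemma gmax_ok:
  assumes g: "g \<in> Ar C" and F: "proj_filtration C (dom C g) F" and R: "reduced C F"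
    and psi: "psi \<in> Ar C" "dom C psi = cod C g" "comp C psi g \<in> F"
  shows "proj_filtration C (cod C g) (gmax g F) \<and> reduced C (gmax g F)"
proof -
  let ?G = "gmax g F"
  have sat: "p2 \<in> ?G" if p1: "p1 \<in> ?G" and p2: "p2 \<in> Ar C" "dom C p2 = cod C g" and ge: "mgeq C p1 p2" for p1 p2
  proof -
    obtain h where h: "h \<in> Ar C" "dom C h = cod C p1" "comp C h p1 = p2" using ge unfolding mgeq_def by blast
    have p1': "p1 \<in> Ar C" "dom C p1 = cod C g" "comp C p1 g \<in> F" using p1 by (auto simp: gmax_def)
    have "comp C (comp C h p1) g = comp C h (comp C p1 g)" using assoc[of g p1 h] g h p1' by simp
    then have "mgeq C (comp C p1 g) (comp C p2 g)" using h p1' g by (intro mgeqI[of h]) auto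
    then have "comp C p2 g \<in> F" using pf_sat[OF F p1'(3)] g p2 comp_ar by auto
    then show ?thesis using p2 by (simp add: gmax_def)
  qed
  have red: "\<exists>t\<in>?G. ext_epi C t \<and> mgeq C t phi" if phi: "phi \<in> ?G" for phi
  proof -
    have ph: "phi \<in> Ar C" "dom C phi = cod C g" "comp C phi g \<in> F" using phi by (auto simp: gmax_def)
    obtain t where t: "t \<in> F" "ext_epi C t" "mgeq C t (comp C phi g)" using red_ext[OF R ph(3)] by blast
    obtain h where h: "h \<in> Ar C" "dom C h = cod C t" "comp C h t = comp C phi g" using t(3) unfolding mgeq_def by blast
    obtain E M where EM: "ext_epi C E" "mono C M" "cod C E = dom C M" "comp C M E = phi"
      using factor[OF ph(1)] by blast
    have E: "E \<in> Ar C" and M: "M \<in> Ar C" using EM ext_epi_ar mono_ar by auto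
    have tA: "t \<in> Ar C" "dom C t = dom C g" using pf_sub[OF F t(1)] by auto
    have dE: "dom C E = cod C g" using EM(3,4) E M ph(2) by (metis comp_dom)
    have cphi: "cod C phi = cod C M" using EM(3,4) E M by (metis comp_cod)
    have Eg: "comp C E g \<in> Ar C" "dom C (comp C E g) = dom C g" "cod C (comp C E g) = cod C E"
      using E g dE comp_ar by auto
    have "comp C M (comp C E g) = comp C phi g" using assoc[of g E M] g E M dE EM by simp
    moreover have "cod C h = cod C M"
      using h tA comp_cod[of t h] ph g cphi by (metis comp_cod)
    ultimately obtain d where d: "d \<in> Ar C" "dom C d = cod C t" "comp C d t = comp C E g"
      using fillin[OF t(2) EM(2), of "comp C E g" h] Eg h tA EM(3) by auto
    have "mgeq C t (comp C E g)" using d by (intro mgeqI[of d]) auto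
    then have "comp C E g \<in> F" using pf_sat[OF F t(1)] Eg by auto
    then have "E \<in> ?G" using E dE by (simp add: gmax_def)
    moreover have "mgeq C E phi" using M EM by (intro mgeqI[of M]) auto
    ultimately show ?thesis using EM(1) by blast
  qed
  have dir: "\<exists>q\<in>?G. mgeq C q p1 \<and> mgeq C q p2" if p1: "p1 \<in> ?G" and p2: "p2 \<in> ?G" for p1 p2
  proof -
    have a1: "p1 \<in> Ar C" "dom C p1 = cod C g" "comp C p1 g \<in> F" using p1 by (auto simp: gmax_def)
    have a2: "p2 \<in> Ar C" "dom C p2 = cod C g" "comp C p2 g \<in> F" using p2 by (auto simp: gmax_def)
    obtain P q1 q2 where P: "P \<in> Ob C" "q1 \<in> hom C P (cod C p1)" "q2 \<in> hom C P (cod C p2)"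
      and U: "\<And>z f1 f2. f1 \<in> hom C z (cod C p1) \<Longrightarrow> f2 \<in> hom C z (cod C p2) \<Longrightarrow>
        (\<exists>!h. h \<in> hom C z P \<and> comp C q1 h = f1 \<and> comp C q2 h = f2)"
      using prodE[OF ar_ob(2)[OF a1(1)] ar_ob(2)[OF a2(1)]] by blast
    have q: "q1 \<in> Ar C" "dom C q1 = P" "cod C q1 = cod C p1" "q2 \<in> Ar C" "dom C q2 = P" "cod C q2 = cod C p2"
      using P by (auto simp: hom_def)
    obtain pi where pi: "pi \<in> hom C (cod C g) P" "comp C q1 pi = p1" "comp C q2 pi = p2"
      using U[of p1 "cod C g" p2] a1 a2 by (auto simp: hom_def)
    have piA: "pi \<in> Ar C" "dom C pi = cod C g" "cod C pi = P" using pi by (auto simp: hom_def)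
    obtain r where r: "r \<in> F" "mgeq C r (comp C p1 g)" "mgeq C r (comp C p2 g)"
      using pf_dir[OF F a1(3) a2(3)] by blast
    have rA: "r \<in> Ar C" "dom C r = dom C g" using pf_sub[OF F r(1)] by auto
    obtain h1 where h1: "h1 \<in> Ar C" "dom C h1 = cod C r" "comp C h1 r = comp C p1 g" using r(2) unfolding mgeq_def by blast
    obtain h2 where h2: "h2 \<in> Ar C" "dom C h2 = cod C r" "comp C h2 r = comp C p2 g" using r(3) unfolding mgeq_def by blast
    have ch1: "cod C h1 = cod C p1" using h1 rA a1 g by (metis comp_cod)
    have ch2: "cod C h2 = cod C p2" using h2 rA a2 g by (metis comp_cod)
    obtain rho where rho: "rho \<in> hom C (cod C r) P" "comp C q1 rho = h1" "comp C q2 rho = h2"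
      using U[of h1 "cod C r" h2] h1 h2 ch1 ch2 by (auto simp: hom_def)
    have rhoA: "rho \<in> Ar C" "dom C rho = cod C r" "cod C rho = P" using rho by (auto simp: hom_def)
    have x1: "comp C rho r \<in> hom C (dom C g) P" using rhoA rA comp_ar by (auto simp: hom_def)
    have x2: "comp C pi g \<in> hom C (dom C g) P" using piA g comp_ar by (auto simp: hom_def)
    have e11: "comp C q1 (comp C rho r) = comp C p1 g" using assoc[of r rho q1] rhoA rA q rho h1 by simp
    have e12: "comp C q2 (comp C rho r) = comp C p2 g" using assoc[of r rho q2] rhoA rA q rho h2 by simp
    have e21: "comp C q1 (comp C pi g) = comp C p1 g" using assoc[of g pi q1] piA g q pi by simp
    have e22: "comp C q2 (comp C pi g) = comp C p2 g" using assoc[of g pi q2] piA g q pi by simp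
    have f1: "comp C p1 g \<in> hom C (dom C g) (cod C p1)" using a1 g comp_ar by (auto simp: hom_def)
    have f2: "comp C p2 g \<in> hom C (dom C g) (cod C p2)" using a2 g comp_ar by (auto simp: hom_def)
    have eq: "comp C rho r = comp C pi g" using U[OF f1 f2] x1 x2 e11 e12 e21 e22 by blast
    have "mgeq C r (comp C pi g)" using rhoA eq by (intro mgeqI[of rho]) auto
    then have "comp C pi g \<in> F" using pf_sat[OF F r(1)] piA g comp_ar by auto
    then have "pi \<in> ?G" using piA by (simp add: gmax_def)
    moreover have "mgeq C pi p1" using q piA pi by (intro mgeqI[of q1]) auto
    moreover have "mgeq C pi p2" using q piA pi by (intro mgeqI[of q2]) auto
    ultimately show ?thesis by blast
  qed
  have ne: "psi \<in> ?G" using psi by (simp add: gmax_def)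
  have pf: "proj_filtration C (cod C g) ?G"
    unfolding proj_filtration_def
  proof (intro conjI ballI impI)
    show "?G \<subseteq> Mor_from C (cod C g)" by (auto simp: gmax_def)
    show "?G \<noteq> {}" using ne by blast
  qed (use dir sat in auto)
  have "reduced C ?G"
    unfolding reduced_def initial_sub_def
    by (rule exI[of _ "{t \<in> ?G. ext_epi C t}"]) (use red in blast)
  with pf show ?thesis by blast
qed

end

context EM begin

definition QO :: "('o \<times> 'm set) set" where
  "QO = {(d,F). d \<in> Ob C \<and> proj_filtration C d F \<and> reduced C F}"

lemma QO_iff: "X \<in> QO \<longleftrightarrow> fst X \<in> Ob C \<and> proj_filtration C (fst X) (snd X) \<and> reduced C (snd X)"
  by (cases X) (simp add: QO_def)

lemma Q_simps:
 "Ob (Qcat C) = QO"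
 "dom (Qcat C) (f,X,Y) = X" "cod (Qcat C) (f,X,Y) = Y"
 "idt (Qcat C) X = (idt C (fst X), X, X)"
 "comp (Qcat C) (g,Y',Z) (f,X,Y) = (comp C g f, X, Z)"
  by (simp_all add: Qcat_def Let_def QO_def)

lemma QAr: "(f,X,Y) \<in> Ar (Qcat C) \<longleftrightarrow> X \<in> QO \<and> Y \<in> QO \<and> f \<in> Ar C \<and> dom C f = fst X \<and> cod C f = fst Y
   \<and> (\<forall>p\<in>snd Y. comp C p f \<in> snd X)"
  by (auto simp: Qcat_def Let_def QO_def hom_def pull_def)

lemma QAr_E:
  assumes "x \<in> Ar (Qcat C)"
  obtains f X Y where "x = (f,X,Y)" "X \<in> QO" "Y \<in> QO" "f \<in> Ar C" "dom C f = fst X" "cod C f = fst Y"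
    "\<forall>p\<in>snd Y. comp C p f \<in> snd X"
  using assms by (cases x) (auto simp: QAr)

lemma Qcat_cat: "is_cat (Qcat C)"
  unfolding is_cat_def
proof (intro conjI ballI impI)
  fix f assume "f \<in> Ar (Qcat C)"
  then show "dom (Qcat C) f \<in> Ob (Qcat C)" "cod (Qcat C) f \<in> Ob (Qcat C)"
    by (auto elim!: QAr_E simp: Q_simps)
next
  fix X assume X: "X \<in> Ob (Qcat C)"
  then have X': "X \<in> QO" "fst X \<in> Ob C" "proj_filtration C (fst X) (snd X)" by (auto simp: Q_simps QO_iff)
  have "\<forall>p\<in>snd X. comp C p (idt C (fst X)) = p" using pf_sub[OF X'(3)] id_r by blast
  then show "idt (Qcat C) X \<in> Ar (Qcat C)" using X' id_ar by (simp add: Q_simps QAr)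
  show "dom (Qcat C) (idt (Qcat C) X) = X" "cod (Qcat C) (idt (Qcat C) X) = X" by (simp_all add: Q_simps)
next
  fix f g assume f: "f \<in> Ar (Qcat C)" and g: "g \<in> Ar (Qcat C)" and fg: "cod (Qcat C) f = dom (Qcat C) g"
  obtain f0 X Y where F: "f = (f0,X,Y)" "X \<in> QO" "Y \<in> QO" "f0 \<in> Ar C" "dom C f0 = fst X" "cod C f0 = fst Y"
    "\<forall>p\<in>snd Y. comp C p f0 \<in> snd X" using f by (rule QAr_E)
  obtain g0 Y' Z where G: "g = (g0,Y',Z)" "Y' \<in> QO" "Z \<in> QO" "g0 \<in> Ar C" "dom C g0 = fst Y'" "cod C g0 = fst Z"
    "\<forall>p\<in>snd Z. comp C p g0 \<in> snd Y'" using g by (rule QAr_E)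
  have YY: "Y' = Y" using fg F G by (simp add: Q_simps)
  have pz: "\<forall>p\<in>snd Z. comp C p (comp C g0 f0) \<in> snd X"
  proof
    fix p assume p: "p \<in> snd Z"
    have pA: "p \<in> Ar C" "dom C p = fst Z" using pf_sub[of "fst Z" "snd Z" p] G(3) p by (auto simp: QO_iff)
    have "comp C p (comp C g0 f0) = comp C (comp C p g0) f0"
      using assoc[of f0 g0 p] F G YY pA by simp
    then show "comp C p (comp C g0 f0) \<in> snd X" using G(7) F(7) p YY by simp
  qed
  show "comp (Qcat C) g f \<in> Ar (Qcat C)"
    using F G YY pz comp_ar by (simp add: Q_simps QAr)
  show "dom (Qcat C) (comp (Qcat C) g f) = dom (Qcat C) f" "cod (Qcat C) (comp (Qcat C) g f) = cod (Qcat C) g"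
    using F G by (simp_all add: Q_simps)
next
  fix f assume "f \<in> Ar (Qcat C)"
  then obtain f0 X Y where F: "f = (f0,X,Y)" "f0 \<in> Ar C" "dom C f0 = fst X" "cod C f0 = fst Y"
    by (rule QAr_E)
  show "comp (Qcat C) (idt (Qcat C) (cod (Qcat C) f)) f = f"
    "comp (Qcat C) f (idt (Qcat C) (dom (Qcat C) f)) = f"
    using F id_l id_r by (simp_all add: Q_simps)
next
  fix f g h assume f: "f \<in> Ar (Qcat C)" and g: "g \<in> Ar (Qcat C)" and h: "h \<in> Ar (Qcat C)"
    and c: "cod (Qcat C) f = dom (Qcat C) g \<and> cod (Qcat C) g = dom (Qcat C) h"
  obtain f0 X Y where F: "f = (f0,X,Y)" "f0 \<in> Ar C" "dom C f0 = fst X" "cod C f0 = fst Y"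
    using f by (rule QAr_E)
  obtain g0 Y' Z where G: "g = (g0,Y',Z)" "g0 \<in> Ar C" "dom C g0 = fst Y'" "cod C g0 = fst Z"
    using g by (rule QAr_E)
  obtain h0 Z' W where H: "h = (h0,Z',W)" "h0 \<in> Ar C" "dom C h0 = fst Z'" "cod C h0 = fst W"
    using h by (rule QAr_E)
  have "Y' = Y" "Z' = Z" using c F G H by (simp_all add: Q_simps)
  then show "comp (Qcat C) h (comp (Qcat C) g f) = comp (Qcat C) (comp (Qcat C) h g) f"
    using F G H assoc[of f0 g0 h0] by (simp add: Q_simps)
qed

lemma id_epi: assumes a: "a \<in> Ob C" shows "epi C (idt C a)"
proof -
  have "f = g" if "f \<in> Ar C" "g \<in> Ar C" "dom C f = a" "dom C g = a"
     "comp C f (idt C a) = comp C g (idt C a)" for f g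
    using that id_r[of f a] id_r[of g a] by simp
  then show ?thesis unfolding epi_def using id_ar[OF a] a by simp
qed

lemma id_extr: assumes a: "a \<in> Ob C" and m: "m \<in> Ar C" and g: "g \<in> Ar C"
    and mo: "mono C m" and gm: "cod C g = dom C m" and mg: "comp C m g = idt C a"
  shows "iso C m"
proof -
  have "cod C (comp C m g) = cod C m" "dom C (comp C m g) = dom C g" using m g gm by simp_all
  then have cm: "cod C m = a" and dg: "dom C g = a" using mg a by simp_all
  have gm2: "comp C g m \<in> Ar C" "cod C (comp C g m) = dom C m" "dom C (comp C g m) = dom C m"
    using m g gm cm dg comp_ar by auto
  have "comp C m (comp C g m) = comp C (comp C m g) m" using assoc[of m g m] m g gm cm dg by simp
  also have "\<dots> = m" using mg id_l[OF m cm] by simp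
  also have "\<dots> = comp C m (idt C (dom C m))" using id_r[OF m] by simp
  finally have eq: "comp C m (comp C g m) = comp C m (idt C (dom C m))" .
  have mm: "\<forall>f\<in>Ar C. \<forall>g\<in>Ar C. cod C f = dom C m \<and> cod C g = dom C m \<and> dom C f = dom C g \<and>
        comp C m f = comp C m g \<longrightarrow> f = g" using mo unfolding mono_def by blast
  have "comp C g m = idt C (dom C m)"
    by (rule mp[OF bspec[OF bspec[OF mm gm2(1)] id_ar[OF ar_ob(1)[OF m]]]])
      (use gm2 eq ar_ob(1)[OF m] in simp)
  then show "iso C m" unfolding iso_def using m g gm cm dg mg by auto
qed

lemma id_ext_epi: assumes a: "a \<in> Ob C" shows "ext_epi C (idt C a)"
  unfolding ext_epi_def using id_epi[OF a] id_extr[OF a] by blast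

lemma free_obj: assumes x: "x \<in> Ob C" shows "(x, Mor_from C x) \<in> QO"
proof -
  have ge: "mgeq C (idt C x) p" if "p \<in> Mor_from C x" for p
    using that x id_r by (intro mgeqI[of p]) auto
  have ix: "idt C x \<in> Mor_from C x" using id_ar[OF x] x by simp
  have "proj_filtration C x (Mor_from C x)"
    unfolding proj_filtration_def using ge ix by blast
  moreover have "reduced C (Mor_from C x)"
    unfolding reduced_def initial_sub_def
    by (rule exI[of _ "{idt C x}"]) (use ge id_ar[OF x] x id_ext_epi[OF x] in auto)
  ultimately show ?thesis using x by (simp add: QO_def)
qed

lemma Qmono_C:
  assumes m: "mono (Qcat C) (m0,X,Y)" shows "mono C m0"
proof -
  have mA: "(m0,X,Y) \<in> Ar (Qcat C)" using m unfolding mono_def by blast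
  then have m0: "m0 \<in> Ar C" "dom C m0 = fst X" "X \<in> QO" by (auto simp: QAr)
  show ?thesis unfolding mono_def
  proof (intro conjI ballI impI)
    show "m0 \<in> Ar C" by (rule m0(1))
    fix f g assume f: "f \<in> Ar C" and g: "g \<in> Ar C"
      and c: "cod C f = dom C m0 \<and> cod C g = dom C m0 \<and> dom C f = dom C g \<and> comp C m0 f = comp C m0 g"
    let ?x = "dom C f"
    have fo: "(?x, Mor_from C ?x) \<in> QO" using free_obj ar_ob f by blast
    have pfX: "proj_filtration C (fst X) (snd X)" using m0 QO_iff by blast
    have "\<forall>p\<in>snd X. comp C p f \<in> Mor_from C ?x"
      using pf_sub[OF pfX] f c m0 comp_ar by auto
    moreover have "\<forall>p\<in>snd X. comp C p g \<in> Mor_from C ?x"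
      using pf_sub[OF pfX] g c m0 comp_ar by auto
    ultimately have A: "(f, (?x, Mor_from C ?x), X) \<in> Ar (Qcat C)" "(g, (?x, Mor_from C ?x), X) \<in> Ar (Qcat C)"
      using fo f g c m0 by (simp_all add: QAr)
    have ceq: "comp (Qcat C) (m0,X,Y) (f, (?x, Mor_from C ?x), X) = comp (Qcat C) (m0,X,Y) (g, (?x, Mor_from C ?x), X)"
      using c by (simp add: Q_simps)
    have mm: "\<forall>f\<in>Ar (Qcat C). \<forall>g\<in>Ar (Qcat C). cod (Qcat C) f = dom (Qcat C) (m0,X,Y) \<and>
        cod (Qcat C) g = dom (Qcat C) (m0,X,Y) \<and> dom (Qcat C) f = dom (Qcat C) g \<and>
        comp (Qcat C) (m0,X,Y) f = comp (Qcat C) (m0,X,Y) g \<longrightarrow> f = g"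
      using m unfolding mono_def by blast
    have "(f, (?x, Mor_from C ?x), X) = (g, (?x, Mor_from C ?x), X)"
      by (rule mp[OF bspec[OF bspec[OF mm A(1)] A(2)]]) (use c in \<open>simp add: Q_simps\<close>)
    then show "f = g" by simp
  qed
qed

lemma Cmono_Q:
  assumes mA: "(m0,X,Y) \<in> Ar (Qcat C)" and m: "mono C m0" shows "mono (Qcat C) (m0,X,Y)"
  unfolding mono_def
proof (intro conjI ballI impI)
  show "(m0,X,Y) \<in> Ar (Qcat C)" by (rule mA)
  fix f g assume f: "f \<in> Ar (Qcat C)" and g: "g \<in> Ar (Qcat C)"
    and c: "cod (Qcat C) f = dom (Qcat C) (m0,X,Y) \<and> cod (Qcat C) g = dom (Qcat C) (m0,X,Y) \<and>
       dom (Qcat C) f = dom (Qcat C) g \<and> comp (Qcat C) (m0,X,Y) f = comp (Qcat C) (m0,X,Y) g"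
  obtain f0 A B where F: "f = (f0,A,B)" "f0 \<in> Ar C" "dom C f0 = fst A" "cod C f0 = fst B"
    using f by (rule QAr_E)
  obtain g0 A' B' where G: "g = (g0,A',B')" "g0 \<in> Ar C" "dom C g0 = fst A'" "cod C g0 = fst B'"
    using g by (rule QAr_E)
  have m0: "dom C m0 = fst X" using mA by (simp add: QAr)
  have e: "B = X" "B' = X" "A' = A" "comp C m0 f0 = comp C m0 g0" using c F G by (simp_all add: Q_simps)
  then have "f0 = g0" using m F G m0 unfolding mono_def by auto
  then show "f = g" using F G e by simp
qed

lemma Qiso_C: assumes "iso (Qcat C) (f0,X,Y)" shows "iso C f0"
proof -
  obtain g where g: "g \<in> Ar (Qcat C)" "dom (Qcat C) g = Y" "cod (Qcat C) g = X"
    "comp (Qcat C) g (f0,X,Y) = idt (Qcat C) X" "comp (Qcat C) (f0,X,Y) g = idt (Qcat C) Y"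
    using assms unfolding iso_def by (auto simp: Q_simps)
  obtain g0 A B where G: "g = (g0,A,B)" "g0 \<in> Ar C" "dom C g0 = fst A" "cod C g0 = fst B"
    using g(1) by (rule QAr_E)
  have fA: "f0 \<in> Ar C" "dom C f0 = fst X" "cod C f0 = fst Y" using assms unfolding iso_def by (auto simp: QAr)
  show ?thesis unfolding iso_def using g G fA by (auto simp: Q_simps)
qed

lemma lift_iso:
  assumes e: "ext_epi (Qcat C) (e0,X1,Y1)" and m: "mono C m" and g: "g \<in> Ar C"
    and gm: "cod C g = dom C m" and eq: "comp C m g = e0"
  shows "iso C m"
proof -
  have eA: "(e0,X1,Y1) \<in> Ar (Qcat C)" using e unfolding ext_epi_def epi_def by blast
  then have E: "X1 \<in> QO" "Y1 \<in> QO" "e0 \<in> Ar C" "dom C e0 = fst X1" "cod C e0 = fst Y1"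
    "\<forall>p\<in>snd Y1. comp C p e0 \<in> snd X1" by (simp_all add: QAr)
  have mA: "m \<in> Ar C" using m mono_ar by blast
  have dg: "dom C g = fst X1" using E eq g mA gm by (metis comp_dom)
  have cm: "cod C m = fst Y1" using E eq g mA gm by (metis comp_cod)
  have pX: "proj_filtration C (fst X1) (snd X1)" "reduced C (snd X1)" using E QO_iff by auto
  have pY: "proj_filtration C (fst Y1) (snd Y1)" using E QO_iff by auto
  obtain gam where gam: "gam \<in> snd Y1" using pf_ne[OF pY] by blast
  have gA: "gam \<in> Ar C" "dom C gam = fst Y1" using pf_sub[OF pY gam] by auto
  have key: "comp C (comp C p m) g = comp C p e0" if "p \<in> Ar C" "dom C p = cod C m" for p
    using assoc[of g m p] that g mA gm eq by simp
  let ?G = "gmax g (snd X1)"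
  have ok: "proj_filtration C (cod C g) ?G \<and> reduced C ?G"
    using gmax_ok[of g "snd X1" "comp C gam m"] g pX dg gA cm mA gm comp_ar key[of gam] E(6) gam by auto
  have Z: "(cod C g, ?G) \<in> QO" using ok ar_ob g by (simp add: QO_def)
  have g': "(g, X1, (cod C g, ?G)) \<in> Ar (Qcat C)" using Z E g dg by (simp add: QAr gmax_def)
  have "\<forall>p\<in>snd Y1. comp C p m \<in> ?G"
    using pf_sub[OF pY] key E(6) mA gm cm comp_ar by (auto simp: gmax_def)
  then have m': "(m, (cod C g, ?G), Y1) \<in> Ar (Qcat C)" using Z E mA gm cm by (simp add: QAr)
  have "mono (Qcat C) (m, (cod C g, ?G), Y1)" using Cmono_Q[OF m' m] .
  moreover have "comp (Qcat C) (m, (cod C g, ?G), Y1) (g, X1, (cod C g, ?G)) = (e0,X1,Y1)"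
    using eq by (simp add: Q_simps)
  moreover have mm: "\<forall>ma\<in>Ar (Qcat C). \<forall>ga\<in>Ar (Qcat C). mono (Qcat C) ma \<and> cod (Qcat C) ga = dom (Qcat C) ma \<and>
      comp (Qcat C) ma ga = (e0,X1,Y1) \<longrightarrow> iso (Qcat C) ma"
    using e unfolding ext_epi_def by blast
  ultimately have "iso (Qcat C) (m, (cod C g, ?G), Y1)"
    using mp[OF bspec[OF bspec[OF mm m'] g']] by (simp add: Q_simps)
  then show "iso C m" by (rule Qiso_C)
qed

end

context EM begin

lemma id_mono: assumes a: "a \<in> Ob C" shows "mono C (idt C a)"
proof -
  have "f = g" if "f \<in> Ar C" "g \<in> Ar C" "cod C f = a" "cod C g = a"
     "comp C (idt C a) f = comp C (idt C a) g" for f g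
    using that id_l[of f a] id_l[of g a] by simp
  then show ?thesis unfolding mono_def using id_ar[OF a] a by simp
qed

lemma QextC:
  assumes e: "ext_epi (Qcat C) (e0,X1,Y1)"
  shows "ext_epi C e0" "gmax e0 (snd X1) \<subseteq> snd Y1"
proof -
  have eA: "(e0,X1,Y1) \<in> Ar (Qcat C)" using e unfolding ext_epi_def epi_def by blast
  then have E: "X1 \<in> QO" "Y1 \<in> QO" "e0 \<in> Ar C" "dom C e0 = fst X1" "cod C e0 = fst Y1"
    "\<forall>p\<in>snd Y1. comp C p e0 \<in> snd X1" by (simp_all add: QAr)
  obtain Ee M where EM: "ext_epi C Ee" "mono C M" "cod C Ee = dom C M" "comp C M Ee = e0"
    using factor[OF E(3)] by blast
  have EA: "Ee \<in> Ar C" and MA: "M \<in> Ar C" using EM ext_epi_ar mono_ar by auto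
  have cM: "cod C M = cod C e0" using EM EA MA by (metis comp_cod)
  have "iso C M" using lift_iso[OF e EM(2) EA EM(3,4)] .
  then obtain k where k: "k \<in> Ar C" "dom C k = cod C M" "cod C k = dom C M"
    "comp C k M = idt C (dom C M)" "comp C M k = idt C (cod C M)" unfolding iso_def by blast
  have epi: "x = y" if x: "x \<in> Ar C" and y: "y \<in> Ar C" and c: "dom C x = cod C e0" "dom C y = cod C e0"
    "cod C x = cod C y" "comp C x e0 = comp C y e0" for x y
  proof -
    have "comp C (comp C x M) Ee = comp C x e0" using assoc[of Ee M x] EA MA x c cM EM by simp
    moreover have "comp C (comp C y M) Ee = comp C y e0" using assoc[of Ee M y] EA MA y c cM EM by simp
    ultimately have eq: "comp C (comp C x M) Ee = comp C (comp C y M) Ee" using c by simp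
    have xm: "comp C x M \<in> Ar C" "dom C (comp C x M) = cod C Ee" "cod C (comp C x M) = cod C x"
      using x MA c cM EM comp_ar by auto
    have ym: "comp C y M \<in> Ar C" "dom C (comp C y M) = cod C Ee" "cod C (comp C y M) = cod C y"
      using y MA c cM EM comp_ar by auto
    have ee: "\<forall>f\<in>Ar C. \<forall>g\<in>Ar C. dom C f = cod C Ee \<and> dom C g = cod C Ee \<and> cod C f = cod C g \<and>
        comp C f Ee = comp C g Ee \<longrightarrow> f = g" using EM(1) unfolding ext_epi_def epi_def by blast
    have xy: "comp C x M = comp C y M"
      by (rule mp[OF bspec[OF bspec[OF ee xm(1)] ym(1)]]) (use xm ym eq c in simp)
    have "x = comp C (comp C x M) k" using assoc[of k M x] k MA x c cM id_r[OF x] by simp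
    also have "\<dots> = comp C (comp C y M) k" using xy by simp
    also have "\<dots> = y" using assoc[of k M y] k MA y c cM id_r[OF y] by simp
    finally show ?thesis .
  qed
  have "epi C e0" unfolding epi_def using E(3) epi by blast
  moreover have "iso C m" if "m \<in> Ar C" "g \<in> Ar C" "mono C m" "cod C g = dom C m" "comp C m g = e0" for m g
    using lift_iso[OF e] that by blast
  ultimately show ext: "ext_epi C e0" unfolding ext_epi_def by blast
  let ?Gm = "gmax e0 (snd X1)"
  have pX: "proj_filtration C (fst X1) (snd X1)" "reduced C (snd X1)" using E QO_iff by auto
  have pY: "proj_filtration C (fst Y1) (snd Y1)" using E QO_iff by auto
  obtain gam where gam: "gam \<in> snd Y1" using pf_ne[OF pY] by blast
  have gA: "gam \<in> Ar C" "dom C gam = fst Y1" using pf_sub[OF pY gam] by auto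
  have ok: "proj_filtration C (cod C e0) ?Gm \<and> reduced C ?Gm"
    using gmax_ok[of e0 "snd X1" gam] E pX gA gam by auto
  have yO: "fst Y1 \<in> Ob C" using E QO_iff by auto
  have Z: "(fst Y1, ?Gm) \<in> QO" using ok E yO by (simp add: QO_def)
  have E2: "(e0, X1, (fst Y1, ?Gm)) \<in> Ar (Qcat C)" using Z E by (simp add: QAr gmax_def)
  have "\<forall>p\<in>snd Y1. comp C p (idt C (fst Y1)) \<in> ?Gm"
    using pf_sub[OF pY] id_r E by (auto simp: gmax_def)
  then have I: "(idt C (fst Y1), (fst Y1, ?Gm), Y1) \<in> Ar (Qcat C)" using Z E id_ar[OF yO] yO
    by (simp add: QAr)
  have Im: "mono (Qcat C) (idt C (fst Y1), (fst Y1, ?Gm), Y1)" using Cmono_Q[OF I id_mono[OF yO]] .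
  have ce: "comp (Qcat C) (idt C (fst Y1), (fst Y1, ?Gm), Y1) (e0, X1, (fst Y1, ?Gm)) = (e0,X1,Y1)"
    using id_l[OF E(3) E(5)] by (simp add: Q_simps)
  have mm: "\<forall>ma\<in>Ar (Qcat C). \<forall>ga\<in>Ar (Qcat C). mono (Qcat C) ma \<and> cod (Qcat C) ga = dom (Qcat C) ma \<and>
      comp (Qcat C) ma ga = (e0,X1,Y1) \<longrightarrow> iso (Qcat C) ma"
    using e unfolding ext_epi_def by blast
  have "iso (Qcat C) (idt C (fst Y1), (fst Y1, ?Gm), Y1)"
    using mp[OF bspec[OF bspec[OF mm I] E2]] Im ce by (simp add: Q_simps)
  then obtain g where g: "g \<in> Ar (Qcat C)" "dom (Qcat C) g = Y1" "cod (Qcat C) g = (fst Y1, ?Gm)"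
    "comp (Qcat C) g (idt C (fst Y1), (fst Y1, ?Gm), Y1) = idt (Qcat C) (fst Y1, ?Gm)"
    unfolding iso_def by (auto simp: Q_simps)
  obtain g0 A B where G: "g = (g0,A,B)" "g0 \<in> Ar C" "dom C g0 = fst A" "cod C g0 = fst B"
    "\<forall>p\<in>snd B. comp C p g0 \<in> snd A" using g(1) by (rule QAr_E)
  have AB: "A = Y1" "B = (fst Y1, ?Gm)" using g G by (simp_all add: Q_simps)
  have "comp C g0 (idt C (fst Y1)) = idt C (fst Y1)" using g(4) G AB by (simp add: Q_simps)
  then have g0: "g0 = idt C (fst Y1)" using id_r[OF G(2)] G(3) AB by simp
  show "?Gm \<subseteq> snd Y1"
  proof
    fix p assume p: "p \<in> ?Gm"
    then have "p \<in> Ar C" "dom C p = fst Y1" using E by (auto simp: gmax_def)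
    then have "comp C p g0 = p" using g0 id_r by simp
    then show "p \<in> snd Y1" using G(5) AB p by auto
  qed
qed

end

context EM begin

lemma Cext_Q:
  assumes eA: "(e0,X1,Y1) \<in> Ar (Qcat C)" and ext: "ext_epi C e0" and sub: "gmax e0 (snd X1) \<subseteq> snd Y1"
  shows "ext_epi (Qcat C) (e0,X1,Y1)"
proof -
  have E: "X1 \<in> QO" "Y1 \<in> QO" "e0 \<in> Ar C" "dom C e0 = fst X1" "cod C e0 = fst Y1"
    "\<forall>p\<in>snd Y1. comp C p e0 \<in> snd X1" using eA by (simp_all add: QAr)
  have ee: "\<forall>f\<in>Ar C. \<forall>g\<in>Ar C. dom C f = cod C e0 \<and> dom C g = cod C e0 \<and> cod C f = cod C g \<and>
        comp C f e0 = comp C g e0 \<longrightarrow> f = g" using ext unfolding ext_epi_def epi_def by blast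
  have ex: "\<forall>m\<in>Ar C. \<forall>g\<in>Ar C. mono C m \<and> cod C g = dom C m \<and> comp C m g = e0 \<longrightarrow> iso C m"
    using ext unfolding ext_epi_def by blast
  have epi: "f = g" if f: "f \<in> Ar (Qcat C)" and g: "g \<in> Ar (Qcat C)"
    and c: "dom (Qcat C) f = Y1" "dom (Qcat C) g = Y1" "cod (Qcat C) f = cod (Qcat C) g"
     "comp (Qcat C) f (e0,X1,Y1) = comp (Qcat C) g (e0,X1,Y1)" for f g
  proof -
    obtain f0 A B where F: "f = (f0,A,B)" "f0 \<in> Ar C" "dom C f0 = fst A" "cod C f0 = fst B"
      using f by (rule QAr_E)
    obtain g0 A' B' where G: "g = (g0,A',B')" "g0 \<in> Ar C" "dom C g0 = fst A'" "cod C g0 = fst B'"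
      using g by (rule QAr_E)
    have e: "A = Y1" "A' = Y1" "B' = B" "comp C f0 e0 = comp C g0 e0" using c F G by (simp_all add: Q_simps)
    have "f0 = g0"
      by (rule mp[OF bspec[OF bspec[OF ee F(2)] G(2)]]) (use e F G E in simp)
    then show ?thesis using F G e by simp
  qed
  have extr: "iso (Qcat C) m" if m: "m \<in> Ar (Qcat C)" and g: "g \<in> Ar (Qcat C)" and mo: "mono (Qcat C) m"
    and c: "cod (Qcat C) g = dom (Qcat C) m" "comp (Qcat C) m g = (e0,X1,Y1)" for m g
  proof -
    obtain m0 A B where M: "m = (m0,A,B)" "A \<in> QO" "B \<in> QO" "m0 \<in> Ar C" "dom C m0 = fst A" "cod C m0 = fst B"
      "\<forall>p\<in>snd B. comp C p m0 \<in> snd A" using m by (rule QAr_E)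
    obtain g0 A' B' where G: "g = (g0,A',B')" "A' \<in> QO" "B' \<in> QO" "g0 \<in> Ar C" "dom C g0 = fst A'" "cod C g0 = fst B'"
      "\<forall>p\<in>snd B'. comp C p g0 \<in> snd A'" using g by (rule QAr_E)
    have e: "B' = A" "A' = X1" "B = Y1" "comp C m0 g0 = e0" using c M G by (simp_all add: Q_simps)
    have m0: "mono C m0" using mo M Qmono_C by blast
    have "iso C m0" by (rule mp[OF bspec[OF bspec[OF ex M(4)] G(4)]]) (use m0 e M G in simp)
    then obtain k where k: "k \<in> Ar C" "dom C k = cod C m0" "cod C k = dom C m0"
      "comp C k m0 = idt C (dom C m0)" "comp C m0 k = idt C (cod C m0)" unfolding iso_def by blast
    have pA: "proj_filtration C (fst A) (snd A)" using M QO_iff by auto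
    have "\<forall>p\<in>snd A. comp C p k \<in> snd Y1"
    proof
      fix p assume p: "p \<in> snd A"
      have pp: "p \<in> Ar C" "dom C p = fst A" using pf_sub[OF pA p] by auto
      have "cod C (comp C m0 g0) = cod C m0" using G(4,6) M(4,5) e(1) by simp
      then have cme: "cod C e0 = cod C m0" using e(4) by simp
      have pk: "comp C p k \<in> Ar C" "dom C (comp C p k) = cod C e0"
        using pp k M(5) cme comp_ar by auto
      have "comp C (comp C p k) e0 = comp C (comp C p k) (comp C m0 g0)" using e by simp
      also have "\<dots> = comp C (comp C (comp C p k) m0) g0"
        using assoc[of g0 m0 "comp C p k"] G M e pk k pp by (simp add: comp_ar)
      also have "comp C (comp C p k) m0 = comp C p (comp C k m0)"
        using assoc[of m0 k p] M k pp by simp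
      also have "\<dots> = p" using k(4) id_r pp M by simp
      finally have "comp C (comp C p k) e0 = comp C p g0" .
      then have "comp C (comp C p k) e0 \<in> snd X1" using G(7) e p by simp
      then have "comp C p k \<in> gmax e0 (snd X1)" using pk by (simp add: gmax_def)
      then show "comp C p k \<in> snd Y1" using sub by blast
    qed
    then have kA: "(k, Y1, A) \<in> Ar (Qcat C)" using k M E e by (simp add: QAr)
    show ?thesis unfolding iso_def
      by (rule conjI[OF m], rule bexI[OF _ kA]) (use M e k in \<open>simp add: Q_simps\<close>)
  qed
  have "epi (Qcat C) (e0,X1,Y1)" unfolding epi_def using eA epi by (simp add: Q_simps)
  then show ?thesis unfolding ext_epi_def using extr by blast
qed

end

context EM begin

lemma QFact: "has_ext_epi_mono_factorizations (Qcat C)"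
  unfolding has_ext_epi_mono_factorizations_def
proof
  fix f assume f: "f \<in> Ar (Qcat C)"
  obtain f0 X Y where F: "f = (f0,X,Y)" "X \<in> QO" "Y \<in> QO" "f0 \<in> Ar C" "dom C f0 = fst X" "cod C f0 = fst Y"
    "\<forall>p\<in>snd Y. comp C p f0 \<in> snd X" using f by (rule QAr_E)
  obtain e0 m0 where EM: "ext_epi C e0" "mono C m0" "cod C e0 = dom C m0" "comp C m0 e0 = f0"
    using factor[OF F(4)] by blast
  have eA: "e0 \<in> Ar C" and mA: "m0 \<in> Ar C" using EM ext_epi_ar mono_ar by auto
  have de: "dom C e0 = fst X" using EM eA mA F by (metis comp_dom)
  have cm: "cod C m0 = fst Y" using EM eA mA F by (metis comp_cod)
  have pX: "proj_filtration C (fst X) (snd X)" "reduced C (snd X)" using F QO_iff by auto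
  have pY: "proj_filtration C (fst Y) (snd Y)" using F QO_iff by auto
  have key: "comp C p m0 \<in> Ar C \<and> dom C (comp C p m0) = cod C e0 \<and> comp C (comp C p m0) e0 \<in> snd X"
    if p: "p \<in> snd Y" for p
  proof -
    have pp: "p \<in> Ar C" "dom C p = cod C m0" using pf_sub[OF pY p] cm by auto
    have "comp C (comp C p m0) e0 = comp C p f0" using assoc[of e0 m0 p] eA mA pp EM by simp
    then show ?thesis using pp mA EM F(7) p comp_ar by simp
  qed
  obtain psi where psi: "psi \<in> snd Y" using pf_ne[OF pY] by blast
  let ?G = "gmax e0 (snd X)"
  have ok: "proj_filtration C (cod C e0) ?G \<and> reduced C ?G"
    using gmax_ok[of e0 "snd X" "comp C psi m0"] eA pX de key[OF psi] by auto
  have Z: "(cod C e0, ?G) \<in> QO" using ok ar_ob eA by (simp add: QO_def)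
  have e': "(e0, X, (cod C e0, ?G)) \<in> Ar (Qcat C)" using Z F eA de by (simp add: QAr gmax_def)
  have m': "(m0, (cod C e0, ?G), Y) \<in> Ar (Qcat C)" using Z F mA EM cm key by (simp add: QAr gmax_def)
  have "ext_epi (Qcat C) (e0, X, (cod C e0, ?G))" using Cext_Q[OF e' EM(1)] by simp
  moreover have "mono (Qcat C) (m0, (cod C e0, ?G), Y)" using Cmono_Q[OF m' EM(2)] .
  moreover have "comp (Qcat C) (m0, (cod C e0, ?G), Y) (e0, X, (cod C e0, ?G)) = f"
    using F EM by (simp add: Q_simps)
  ultimately show "\<exists>e m. ext_epi (Qcat C) e \<and> mono (Qcat C) m \<and> cod (Qcat C) e = dom (Qcat C) m \<and>
      comp (Qcat C) m e = f"
    by (intro exI[of _ "(e0, X, (cod C e0, ?G))"] exI[of _ "(m0, (cod C e0, ?G), Y)"]) (simp add: Q_simps)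
qed

lemma QFill: "has_diagonal_fill_in (Qcat C)"
  unfolding has_diagonal_fill_in_def
proof (intro allI impI)
  fix e m u v
  assume H: "ext_epi (Qcat C) e \<and> mono (Qcat C) m \<and> u \<in> Ar (Qcat C) \<and> v \<in> Ar (Qcat C) \<and>
       dom (Qcat C) u = dom (Qcat C) e \<and> cod (Qcat C) u = dom (Qcat C) m \<and>
       dom (Qcat C) v = cod (Qcat C) e \<and> cod (Qcat C) v = cod (Qcat C) m \<and>
       comp (Qcat C) v e = comp (Qcat C) m u"
  have eA: "e \<in> Ar (Qcat C)" using H unfolding ext_epi_def epi_def by blast
  have mA': "m \<in> Ar (Qcat C)" using H unfolding mono_def by blast
  obtain e0 X1 Y1 where E: "e = (e0,X1,Y1)" "X1 \<in> QO" "Y1 \<in> QO" "e0 \<in> Ar C" "dom C e0 = fst X1" "cod C e0 = fst Y1"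
    "\<forall>p\<in>snd Y1. comp C p e0 \<in> snd X1" using eA by (rule QAr_E)
  obtain m0 A B where M: "m = (m0,A,B)" "A \<in> QO" "B \<in> QO" "m0 \<in> Ar C" "dom C m0 = fst A" "cod C m0 = fst B"
    "\<forall>p\<in>snd B. comp C p m0 \<in> snd A" using mA' by (rule QAr_E)
  obtain u0 Xu Yu where U: "u = (u0,Xu,Yu)" "u0 \<in> Ar C" "dom C u0 = fst Xu" "cod C u0 = fst Yu"
    "\<forall>p\<in>snd Yu. comp C p u0 \<in> snd Xu" using H by (elim conjE QAr_E)
  obtain v0 Xv Yv where V: "v = (v0,Xv,Yv)" "v0 \<in> Ar C" "dom C v0 = fst Xv" "cod C v0 = fst Yv"
    "\<forall>p\<in>snd Yv. comp C p v0 \<in> snd Xv" using H by (elim conjE QAr_E)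
  have h1: "dom (Qcat C) u = dom (Qcat C) e" and h2: "cod (Qcat C) u = dom (Qcat C) m"
    and h3: "dom (Qcat C) v = cod (Qcat C) e" and h4: "cod (Qcat C) v = cod (Qcat C) m"
    and h5: "comp (Qcat C) v e = comp (Qcat C) m u" and he: "ext_epi (Qcat C) e" and hm: "mono (Qcat C) m"
    using H by blast+
  have eq: "Xu = X1" "Yu = A" "Xv = Y1" "Yv = B" "comp C v0 e0 = comp C m0 u0"
    using h1 h2 h3 h4 h5 E(1) M(1) U(1) V(1) by (simp_all add: Q_simps)
  have he': "ext_epi (Qcat C) (e0,X1,Y1)" using he E(1) by simp
  have ext: "ext_epi C e0" and sub: "gmax e0 (snd X1) \<subseteq> snd Y1" using QextC[OF he'] by auto
  have mo: "mono C m0" using Qmono_C[of m0 A B] hm M(1) by simp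
  have ex1: "\<exists>!d. d \<in> Ar C \<and> dom C d = cod C e0 \<and> cod C d = dom C m0 \<and> comp C d e0 = u0 \<and> comp C m0 d = v0"
    by (rule fillin[OF ext mo U(2) V(2)]) (use eq E M U V in simp_all)
  then obtain d0 where d0: "d0 \<in> Ar C" "dom C d0 = cod C e0" "cod C d0 = dom C m0" "comp C d0 e0 = u0"
    "comp C m0 d0 = v0" by blast
  have pA: "proj_filtration C (fst A) (snd A)" using M QO_iff by auto
  have "\<forall>p\<in>snd A. comp C p d0 \<in> snd Y1"
  proof
    fix p assume p: "p \<in> snd A"
    have pp: "p \<in> Ar C" "dom C p = cod C d0" using pf_sub[OF pA p] d0 M by auto
    have "comp C (comp C p d0) e0 = comp C p u0" using assoc[of e0 d0 p] pp d0 E by simp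
    then have "comp C p d0 \<in> gmax e0 (snd X1)" using pp d0 U(5) eq p comp_ar by (simp add: gmax_def)
    then show "comp C p d0 \<in> snd Y1" using sub by blast
  qed
  then have dA: "(d0, Y1, A) \<in> Ar (Qcat C)" using d0 E M by (simp add: QAr)
  show "\<exists>!d. d \<in> Ar (Qcat C) \<and> dom (Qcat C) d = cod (Qcat C) e \<and> cod (Qcat C) d = dom (Qcat C) m \<and>
        comp (Qcat C) d e = u \<and> comp (Qcat C) m d = v"
  proof (rule ex1I[of _ "(d0, Y1, A)"])
    show "(d0, Y1, A) \<in> Ar (Qcat C) \<and> dom (Qcat C) (d0, Y1, A) = cod (Qcat C) e \<and>
        cod (Qcat C) (d0, Y1, A) = dom (Qcat C) m \<and> comp (Qcat C) (d0, Y1, A) e = u \<and> comp (Qcat C) m (d0, Y1, A) = v"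
      using dA E M U V d0 eq by (simp add: Q_simps)
  next
    fix d assume d: "d \<in> Ar (Qcat C) \<and> dom (Qcat C) d = cod (Qcat C) e \<and> cod (Qcat C) d = dom (Qcat C) m \<and>
        comp (Qcat C) d e = u \<and> comp (Qcat C) m d = v"
    obtain d1 P R where D: "d = (d1,P,R)" "d1 \<in> Ar C" "dom C d1 = fst P" "cod C d1 = fst R"
      using d by (elim conjE QAr_E)
    have de: "P = Y1" "R = A" "comp C d1 e0 = u0" "comp C m0 d1 = v0" using d D E M U V by (simp_all add: Q_simps)
    have "d1 = d0" using ex1 d0 D de E M by (metis)
    then show "d = (d0, Y1, A)" using D de by simp
  qed
qed

end

theorem mainTheorem9:
  fixes C :: "('o, 'm) cat"
  assumes "universe_type TYPE('u)"
    and "is_cat C"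
    and "locally_small TYPE('u) C"
    and "complete TYPE('u) C"
    and "cocomplete TYPE('u) C"
    and "ext_co_well_powered TYPE('u) C"
    and "ext_epi_mono_cat C"
  shows "ext_epi_mono_cat (Qcat C)"
proof -
  have pr: "\<forall>x\<in>Ob C. \<forall>y\<in>Ob C. \<exists>P p1 p2. P \<in> Ob C \<and> p1 \<in> hom C P x \<and> p2 \<in> hom C P y \<and>
     (\<forall>z f1 f2. f1 \<in> hom C z x \<longrightarrow> f2 \<in> hom C z y \<longrightarrow>
        (\<exists>!h. h \<in> hom C z P \<and> comp C p1 h = f1 \<and> comp C p2 h = f2))"
    using binprod[OF assms(1,2,4)] by blast
  interpret EM C
    using assms(2,7) pr unfolding ext_epi_mono_cat_def by unfold_locales auto
  show ?thesis unfolding ext_epi_mono_cat_def using Qcat_cat QFact QFill by blast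
qed

end
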